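(* Let $\Pi\subset\mathbb{R}^2$ be a segment or the union of two segments intersecting only at one endpoint. Then, for every $\delta>0$ small enough, there exist a set $\Delta\subset\mathbb{R}^2$ (depending on $\delta$) and a piecewise affine homeomorphism $\Phi_\delta:\mathbb{R}^2\setminus\Pi\to\mathbb{R}^2\setminus\Delta$ such that: (i) $\mathbb{R}^2\setminus\Delta$ is a Lipschitz domain; (ii) $\Phi_\delta(x)=x$ for every $x\in\mathbb{R}^2\setminus(\Pi)_\delta$; (iii) $\|\Phi_\delta-\mathrm{Id}\|_{W^{1,\infty}(\mathbb{R}^2\setminus\Pi)}\to0$ as $\delta\to0$.
   Context: For $U\subset\mathbb{R}^2$ and $\delta>0$, $(U)_\delta:=U+B_\delta(0)$ denotes the open $\delta$-neighborhood of $U$. *)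

theory Defs
  imports "HOL-Analysis.Analysis"
begin

definition nbhd :: "(real^2) set \<Rightarrow> real \<Rightarrow> (real^2) set" where
  "nbhd U \<delta> = {x + y | x y. x \<in> U \<and> y \<in> ball 0 \<delta>}"

definition segment_or_two_segments :: "(real^2) set \<Rightarrow> bool" where
  "segment_or_two_segments P \<longleftrightarrow>
     (\<exists>a b. a \<noteq> b \<and> P = closed_segment a b) \<or>
     (\<exists>a b c. a \<noteq> b \<and> b \<noteq> c \<and> closed_segment a b \<inter> closed_segment b c = {b} \<and>
        P = closed_segment a b \<union> closed_segment b c)"

definition piecewise_affine_on :: "(real^2) set \<Rightarrow> (real^2 \<Rightarrow> real^2) \<Rightarrow> bool" where
  "piecewise_affine_on S f \<longleftrightarrow>
     (\<exists>\<P>. finite \<P> \<and> (\<forall>P\<in>\<P>. polyhedron P) \<and> S \<subseteq> \<Union>\<P> \<and>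
        (\<forall>P\<in>\<P>. \<exists>A b. linear A \<and> (\<forall>x\<in>P \<inter> S. f x = A x + b)))"

definition lipschitz_domain :: "(real^2) set \<Rightarrow> bool" where
  "lipschitz_domain U \<longleftrightarrow> open U \<and> connected U \<and>
     (\<forall>x\<in>frontier U. \<exists>r>0. \<exists>R::real^2 \<Rightarrow> real^2. \<exists>h::real \<Rightarrow> real. \<exists>L.
        orthogonal_transformation R \<and> L-lipschitz_on UNIV h \<and>
        U \<inter> ball x r = {y \<in> ball x r. (R (y - x)) $ 2 < h ((R (y - x)) $ 1)})"

text \<open>The gradient is the a.e. classical derivative (which agrees with the weak gradient for
  the continuous piecewise affine maps considered here).\<close>
definition Linf_part :: "(real^2) set \<Rightarrow> (real^2 \<Rightarrow> real^2) \<Rightarrow> ereal" where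
  "Linf_part S f = Inf {C. AE x in lebesgue_on S. ereal (norm (f x)) \<le> C}"

definition grad_Linf_part :: "(real^2) set \<Rightarrow> (real^2 \<Rightarrow> real^2) \<Rightarrow> ereal" where
  "grad_Linf_part S f = Inf {C. AE x in lebesgue_on S.
       f differentiable (at x) \<and> ereal (onorm (frechet_derivative f (at x))) \<le> C}"

definition W1inf_norm :: "(real^2) set \<Rightarrow> (real^2 \<Rightarrow> real^2) \<Rightarrow> ereal" where
  "W1inf_norm S f = Linf_part S f + grad_Linf_part S f"

end

theory Submission
  imports Defs
begin

lemma ae_pw:
  fixes F :: "real^2 \<Rightarrow> real^2"
  assumes S: "open S" and fin: "finite PP" and cv: "\<forall>P\<in>PP. convex P" and cov: "S \<subseteq> \<Union>PP"
   and aff: "\<forall>P\<in>PP. \<exists>A c. linear A \<and> onorm A \<le> C \<and> (\<forall>x\<in>P\<inter>S. F x = A x + c)"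
  shows "AE x in lebesgue_on S. F differentiable (at x) \<and> ereal (onorm (frechet_derivative F (at x))) \<le> ereal C"
proof (rule AE_I')
  let ?N = "S \<inter> \<Union>(frontier ` PP)"
  have neg: "negligible (\<Union>(frontier ` PP))"
    using fin cv by (intro negligible_Union) (auto intro: negligible_convex_frontier)
  have "S \<in> sets lebesgue" using S by auto
  then show "?N \<in> null_sets (lebesgue_on S)"
    using neg by (simp add: null_sets_restrict_space negligible_iff_null_sets null_sets_completion_subset)
      (metis Int_lower2 negligible_iff_null_sets negligible_subset)
  show "{x \<in> space (lebesgue_on S). \<not> (F differentiable (at x) \<and> ereal (onorm (frechet_derivative F (at x))) \<le> ereal C)} \<subseteq> ?N"
  proof clarify
    fix x assume xs: "x \<in> space (lebesgue_on S)" and nd: "\<not> (F differentiable (at x) \<and> ereal (onorm (frechet_derivative F (at x))) \<le> ereal C)"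
    have x: "x \<in> S" using xs by simp
    show "x \<in> ?N"
    proof (rule ccontr)
      assume "x \<notin> ?N"
      then have nf: "\<forall>P\<in>PP. x \<notin> frontier P" using x by auto
      obtain P where P: "P \<in> PP" "x \<in> P" using cov x by auto
      have xi: "x \<in> interior P" using nf P closure_subset[of P] by (auto simp: frontier_def)
      obtain A c where A: "linear A" "onorm A \<le> C" "\<forall>y\<in>P\<inter>S. F y = A y + c" using aff P by blast
      have "((\<lambda>y. A y + c) has_derivative A) (at x)"
        using A(1) by (auto intro!: derivative_eq_intros simp: linear_imp_has_derivative)
      then have d: "(F has_derivative A) (at x)"
        apply (rule has_derivative_transform_within_open[where s="interior P \<inter> S"])
        using S xi x A(3) interior_subset[of P] by (auto simp: subset_iff)
      then have "F differentiable (at x)" by (auto simp: differentiable_def)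
      moreover have "frechet_derivative F (at x) = A" using d frechet_derivative_at by metis
      ultimately show False using nd A(2) by simp
    qed
  qed
qed

definition phi1 :: "real \<Rightarrow> real \<Rightarrow> real \<Rightarrow> real \<Rightarrow> real" where
  "phi1 m s K z = z + m * (sgn z * max 0 (s * K - \<bar>z\<bar>))"
definition psi1 :: "real \<Rightarrow> real \<Rightarrow> real \<Rightarrow> real \<Rightarrow> real" where
  "psi1 m s K z = z - m / (1 - m) * (sgn z * max 0 (s * K - \<bar>z\<bar>))"

lemma phi1_neg: "phi1 m s K (-z) = - phi1 m s K z"
  by (simp add: phi1_def sgn_minus algebra_simps)
lemma psi1_neg: "psi1 m s K (-z) = - psi1 m s K z"
  by (simp add: psi1_def sgn_minus algebra_simps)

lemma phi1_pos:
  fixes m s K z :: real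
  assumes "0 < m" "m < 1" "0 < s" "z > 0"
  shows "phi1 m s K z > 0 \<and> \<not> (K \<ge> 0 \<and> phi1 m s K z \<le> m * s * K)"
proof (cases "s * K - z \<le> 0")
  case True
  then have e: "phi1 m s K z = z" using assms by (simp add: phi1_def)
  have "m * s * K < z"
  proof (cases "K > 0")
    case True
    then have "m * (s * K) < s * K" using assms by simp
    then show ?thesis using \<open>s * K - z \<le> 0\<close> by (simp add: mult.assoc)
  next
    case False
    then have "m * s * K \<le> 0" using assms by (simp add: mult_nonneg_nonpos)
    then show ?thesis using assms by simp
  qed
  then show ?thesis using e assms by auto
next
  case False
  then have e: "phi1 m s K z = m * (s * K) + (1 - m) * z" using assms by (simp add: phi1_def algebra_simps)
  have h1: "(1 - m) * z > 0" using assms by simp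
  have "s * K > 0" using False assms by linarith
  then have h2: "m * (s * K) > 0" using assms by simp
  have h3: "m * s * K = m * (s * K)" by simp
  show ?thesis unfolding e h3 using h1 h2 by linarith
qed


lemma psi1_pos:
  fixes m s K z :: real
  assumes "0 < m" "m < 1" "0 < s" "z > 0" "\<not> (K \<ge> 0 \<and> z \<le> m * s * K)"
  shows "psi1 m s K z > 0"
proof (cases "s * K - z \<le> 0")
  case True
  then show ?thesis using assms by (simp add: psi1_def)
next
  case False
  then have "s * K > 0" using assms by linarith
  then have K: "K > 0" using assms by (simp add: zero_less_mult_iff)
  have e: "psi1 m s K z = (z - m * s * K) / (1 - m)" using assms False
    by (simp add: psi1_def field_simps)
  show ?thesis unfolding e using assms K by simp
qed

lemma L1:
  fixes m s K z :: real
  assumes "0 < m" "m < 1" "0 < s" "\<not> (K \<ge> 0 \<and> z = 0)"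
  shows "\<not> (K \<ge> 0 \<and> \<bar>phi1 m s K z\<bar> \<le> m * s * K)"
proof -
  consider "z > 0" | "z < 0" | "z = 0" by linarith
  then show ?thesis
  proof cases
    case 1 then show ?thesis using phi1_pos[where K=K, OF assms(1-3) 1] by simp
  next
    case 2 then have "-z > 0" by simp
    from phi1_pos[where K=K, OF assms(1-3) this] show ?thesis by (simp add: phi1_neg)
  next
    case 3 then show ?thesis using assms by (simp add: phi1_def)
  qed
qed

lemma L2:
  fixes m s K z :: real
  assumes "0 < m" "m < 1" "0 < s" "\<not> (K \<ge> 0 \<and> \<bar>z\<bar> \<le> m * s * K)"
  shows "\<not> (K \<ge> 0 \<and> psi1 m s K z = 0)"
proof -
  consider "z > 0" | "z < 0" | "z = 0" by linarith
  then show ?thesis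
  proof cases
    case 1 then show ?thesis using psi1_pos[where K=K, OF assms(1-3) 1] assms(4) by auto
  next
    case 2 then have "-z > 0" by simp
    from psi1_pos[where K=K, OF assms(1-3) this] show ?thesis using assms(4) 2 by (auto simp: psi1_neg)
  next
    case 3 then show ?thesis using assms by (simp add: psi1_def)
  qed
qed

lemma L3_pos:
  fixes m s K z :: real
  assumes "0 < m" "m < 1" "0 < s" "z > 0"
  shows "psi1 m s K (phi1 m s K z) = z"
proof (cases "s * K - z \<le> 0")
  case True
  then have e: "phi1 m s K z = z" using assms by (simp add: phi1_def)
  show ?thesis unfolding e using True assms by (simp add: psi1_def)
next
  case False
  then have e: "phi1 m s K z = m * (s * K) + (1 - m) * z" using assms by (simp add: phi1_def algebra_simps)
  have p: "m * (s * K) + (1 - m) * z > 0" using phi1_pos[where K=K, OF assms] e by simp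
  have q: "s * K - (m * (s * K) + (1 - m) * z) = (1 - m) * (s * K - z)" by (simp add: algebra_simps)
  have q2: "(1 - m) * (s * K - z) > 0" using False assms by simp
  show ?thesis unfolding e psi1_def using p q q2 assms by (simp add: field_simps)
qed

lemma L3:
  fixes m s K z :: real
  assumes "0 < m" "m < 1" "0 < s" "\<not> (K \<ge> 0 \<and> z = 0)"
  shows "psi1 m s K (phi1 m s K z) = z"
proof -
  consider "z > 0" | "z < 0" | "z = 0" by linarith
  then show ?thesis
  proof cases
    case 1 then show ?thesis using L3_pos[OF assms(1-3) 1] by simp
  next
    case 2 then have "-z > 0" by simp
    from L3_pos[OF assms(1-3) this] show ?thesis by (simp add: phi1_neg psi1_neg)
  next
    case 3 then show ?thesis using assms by (simp add: phi1_def psi1_def)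
  qed
qed

lemma L4_pos:
  fixes m s K z :: real
  assumes "0 < m" "m < 1" "0 < s" "z > 0" "\<not> (K \<ge> 0 \<and> z \<le> m * s * K)"
  shows "phi1 m s K (psi1 m s K z) = z"
proof (cases "s * K - z \<le> 0")
  case True
  then have e: "psi1 m s K z = z" using assms by (simp add: psi1_def)
  show ?thesis unfolding e using True assms by (simp add: phi1_def)
next
  case False
  then have "s * K > 0" using assms by linarith
  then have K: "K > 0" using assms by (simp add: zero_less_mult_iff)
  have e: "psi1 m s K z = (z - m * s * K) / (1 - m)" using assms False
    by (simp add: psi1_def field_simps)
  have p: "(z - m * s * K) / (1 - m) > 0" using psi1_pos[OF assms] e by simp
  have q: "s * K - (z - m * s * K) / (1 - m) = (s * K - z) / (1 - m)" using assms
    by (simp add: field_simps)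
  have q2: "(s * K - z) / (1 - m) > 0" using False assms by simp
  have "phi1 m s K ((z - m * s * K) / (1 - m)) = (z - m * s * K) / (1 - m) + m * ((s * K - z) / (1 - m))"
  proof -
    define qq where "qq = (z - m * s * K) / (1 - m)"
    have "qq > 0" "s * K - qq > 0" "s * K - qq = (s * K - z) / (1 - m)" using p q q2 unfolding qq_def by auto
    then show ?thesis unfolding phi1_def qq_def[symmetric] by simp
  qed
  also have "\<dots> = ((z - m * s * K) + m * (s * K - z)) / (1 - m)" by (simp add: add_divide_distrib)
  also have "(z - m * s * K) + m * (s * K - z) = (1 - m) * z" by (simp add: algebra_simps)
  also have "(1 - m) * z / (1 - m) = z" using assms by simp
  finally show ?thesis unfolding e .
qed

lemma L4:
  fixes m s K z :: real
  assumes "0 < m" "m < 1" "0 < s" "\<not> (K \<ge> 0 \<and> \<bar>z\<bar> \<le> m * s * K)"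
  shows "phi1 m s K (psi1 m s K z) = z"
proof -
  consider "z > 0" | "z < 0" | "z = 0" by linarith
  then show ?thesis
  proof cases
    case 1 then show ?thesis using L4_pos[OF assms(1-3) 1] assms(4) by auto
  next
    case 2 then have "-z > 0" by simp
    from L4_pos[OF assms(1-3) this] show ?thesis using assms(4) 2 by (auto simp: phi1_neg psi1_neg)
  next
    case 3 then show ?thesis using assms by (simp add: phi1_def psi1_def)
  qed
qed

definition J :: "real^2 \<Rightarrow> real^2" where "J v = (\<chi> i. if i = 1 then - v$2 else v$1)"

lemma J1[simp]: "J v $ 1 = - v$2" and J2[simp]: "J v $ 2 = v $ 1"
  by (auto simp: J_def)

lemma inner2: "(x::real^2) \<bullet> y = x$1 * y$1 + x$2 * y$2"
  by (simp add: inner_vec_def sum_2)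

lemma ev_lt: "isCont f x \<Longrightarrow> (f x::real) < c \<Longrightarrow> eventually (\<lambda>y. f y < c) (nhds x)"
  unfolding eventually_nhds_conv_at isCont_def using order_tendstoD(2) by blast
lemma ev_gt: "isCont f x \<Longrightarrow> (f x::real) > c \<Longrightarrow> eventually (\<lambda>y. f y > c) (nhds x)"
  unfolding eventually_nhds_conv_at isCont_def using order_tendstoD(1) by blast

lemma cont_sgnmax:
  fixes K z :: "real^2 \<Rightarrow> real"
  assumes K: "continuous_on T K" and z: "continuous_on T z" and T: "open T"
    and h: "\<forall>x\<in>T. z x = 0 \<longrightarrow> c * K x < 0"
  shows "continuous_on T (\<lambda>x. sgn (z x) * max 0 (c * K x - \<bar>z x\<bar>))"
proof -
  have "isCont (\<lambda>x. sgn (z x) * max 0 (c * K x - \<bar>z x\<bar>)) x" if x: "x \<in> T" for x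
  proof -
    have Kc: "isCont K x" and zc: "isCont z x" using K z T x continuous_on_eq_continuous_at by auto
    have base: "isCont (\<lambda>y. sgn (z x) * max 0 (c * K y - \<bar>z y\<bar>)) x"
      using Kc zc by (intro continuous_intros)
    show ?thesis
    proof (cases "z x = 0")
      case True
      then have "c * K x - \<bar>z x\<bar> < 0" using h x by auto
      moreover have "isCont (\<lambda>y. c * K y - \<bar>z y\<bar>) x" using Kc zc by (intro continuous_intros)
      ultimately have "eventually (\<lambda>y. c * K y - \<bar>z y\<bar> < 0) (nhds x)"
        using ev_lt by blast
      then have "eventually (\<lambda>y. sgn (z y) * max 0 (c * K y - \<bar>z y\<bar>) = sgn (z x) * max 0 (c * K y - \<bar>z y\<bar>)) (nhds x)"
        by eventually_elim auto
      from isCont_cong[OF this] base show ?thesis by blast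
    next
      case False
      then consider "z x > 0" | "z x < 0" by linarith
      then have "eventually (\<lambda>y. sgn (z y) = sgn (z x)) (nhds x)"
      proof cases
        case 1
        then have "eventually (\<lambda>y. z y > 0) (nhds x)" using zc
          using ev_gt[where f=z and c=0] by blast
        then show ?thesis by eventually_elim (use 1 in auto)
      next
        case 2
        then have "eventually (\<lambda>y. z y < 0) (nhds x)" using zc
          using ev_lt[where f=z and c=0] by blast
        then show ?thesis by eventually_elim (use 2 in auto)
      qed
      then have "eventually (\<lambda>y. sgn (z y) * max 0 (c * K y - \<bar>z y\<bar>) = sgn (z x) * max 0 (c * K y - \<bar>z y\<bar>)) (nhds x)"
        by eventually_elim auto
      from isCont_cong[OF this] base show ?thesis by blast
    qed
  qed
  then show ?thesis using T continuous_on_eq_continuous_at by blast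
qed

locale vconf =
  fixes b n :: "real^2" and ra rc al be :: real
  assumes nn: "n \<bullet> n = 1" and ra: "ra > 0" and rc: "rc > 0"
begin

definition "e = J n"
definition "sg x = n \<bullet> (x - b)"
definition "ta x = e \<bullet> (x - b)"
definition "kk t = 1 + t / ra - (1 / ra + 1 / rc) * max t 0"
definition "ff t = al * t + (be - al) * max t 0"
definition "KK x = kk (sg x)"
definition "zz x = ta x - ff (sg x)"
definition "GG s x = sgn (zz x) * max 0 (s * KK x - \<bar>zz x\<bar>)"
definition "Phi m s x = x + (m * GG s x) *\<^sub>R e"
definition "Psi m s x = x - (m / (1 - m) * GG s x) *\<^sub>R e"
definition "Dl m s = {x. KK x \<ge> 0 \<and> \<bar>zz x\<bar> \<le> m * s * KK x}"
definition "PP = {x. KK x \<ge> 0 \<and> zz x = 0}"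

lemma ee: "e \<bullet> e = 1" and ne: "n \<bullet> e = 0" and en: "e \<bullet> n = 0"
  using nn by (auto simp: e_def inner2 power2_eq_square algebra_simps)

lemma sg_e[simp]: "sg (x + t *\<^sub>R e) = sg x" and ta_e[simp]: "ta (x + t *\<^sub>R e) = ta x + t"
  and KK_e[simp]: "KK (x + t *\<^sub>R e) = KK x" and zz_e[simp]: "zz (x + t *\<^sub>R e) = zz x + t"
  by (auto simp: sg_def ta_def KK_def zz_def algebra_simps inner_diff_right ne ee)

lemma sg_me[simp]: "sg (x - t *\<^sub>R e) = sg x" and KK_me[simp]: "KK (x - t *\<^sub>R e) = KK x" and zz_me[simp]: "zz (x - t *\<^sub>R e) = zz x - t"
  using sg_e[of x "-t"] KK_e[of x "-t"] zz_e[of x "-t"] by auto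

lemma nn2: "n$1 * n$1 + n$2 * n$2 = 1" using nn by (simp add: inner2)

lemma decomp: "x = b + sg x *\<^sub>R n + ta x *\<^sub>R e"
proof -
  have "b$1 + (n$1 * (x$1 - b$1) + n$2 * (x$2 - b$2)) * n$1 + (- n$2 * (x$1 - b$1) + n$1 * (x$2 - b$2)) * (- n$2)
     = b$1 + (x$1 - b$1) * (n$1 * n$1 + n$2 * n$2)" by (simp add: algebra_simps)
  moreover have "b$2 + (n$1 * (x$1 - b$1) + n$2 * (x$2 - b$2)) * n$2 + (- n$2 * (x$1 - b$1) + n$1 * (x$2 - b$2)) * (n$1)
     = b$2 + (x$2 - b$2) * (n$1 * n$1 + n$2 * n$2)" by (simp add: algebra_simps)
  ultimately show ?thesis unfolding vec_eq_iff forall_2 sg_def ta_def e_def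
    by (simp add: inner2 nn2)
qed

end

context vconf begin

lemma cont_sg: "continuous_on X sg" unfolding sg_def by (intro continuous_intros)
lemma cont_ta: "continuous_on X ta" unfolding ta_def by (intro continuous_intros)
lemma cont_KK: "continuous_on X KK" unfolding KK_def kk_def sg_def using ra by (intro continuous_intros) auto
lemma cont_zz: "continuous_on X zz" unfolding zz_def ff_def ta_def sg_def by (intro continuous_intros)

lemma closed_PP: "closed PP"
  unfolding PP_def using cont_KK cont_zz
  by (intro closed_Collect_conj closed_Collect_le closed_Collect_eq continuous_intros) auto

lemma closed_Dl: "closed (Dl m s)"
  unfolding Dl_def using cont_KK cont_zz
  by (intro closed_Collect_conj closed_Collect_le closed_Collect_eq continuous_intros) auto

lemma zz_Phi: "zz (Phi m s x) = phi1 m s (KK x) (zz x)" and KK_Phi: "KK (Phi m s x) = KK x"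
  by (simp_all add: Phi_def GG_def phi1_def)

lemma zz_Psi: "zz (Psi m s x) = psi1 m s (KK x) (zz x)" and KK_Psi: "KK (Psi m s x) = KK x"
  by (simp_all add: Psi_def GG_def psi1_def)

context fixes m s :: real assumes m0: "0 < m" and m1: "m < 1" and s0: "0 < s"
begin

lemma Phi_out: "x \<notin> PP \<Longrightarrow> Phi m s x \<notin> Dl m s"
  using L1[OF m0 m1 s0, of "KK x" "zz x"] by (simp add: PP_def Dl_def zz_Phi KK_Phi)

lemma Psi_out: "x \<notin> Dl m s \<Longrightarrow> Psi m s x \<notin> PP"
  using L2[OF m0 m1 s0, of "KK x" "zz x"] by (simp add: PP_def Dl_def zz_Psi KK_Psi)

lemma Psi_Phi: assumes "x \<notin> PP" shows "Psi m s (Phi m s x) = x"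
proof -
  have h: "\<not> (KK x \<ge> 0 \<and> zz x = 0)" using assms by (simp add: PP_def)
  have "psi1 m s (KK x) (phi1 m s (KK x) (zz x)) = zz x" using L3[OF m0 m1 s0 h] .
  then have "m / (1 - m) * GG s (Phi m s x) = phi1 m s (KK x) (zz x) - zz x"
    unfolding GG_def zz_Phi KK_Phi psi1_def by linarith
  also have "\<dots> = m * GG s x" by (simp add: phi1_def GG_def)
  finally show ?thesis by (simp add: Psi_def Phi_def)
qed

lemma Phi_Psi: assumes "x \<notin> Dl m s" shows "Phi m s (Psi m s x) = x"
proof -
  have h: "\<not> (KK x \<ge> 0 \<and> \<bar>zz x\<bar> \<le> m * s * KK x)" using assms by (simp add: Dl_def)
  have "phi1 m s (KK x) (psi1 m s (KK x) (zz x)) = zz x" using L4[OF m0 m1 s0 h] .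
  then have "m * GG s (Psi m s x) = zz x - psi1 m s (KK x) (zz x)"
    unfolding GG_def zz_Psi KK_Psi phi1_def by linarith
  also have "\<dots> = m / (1 - m) * GG s x" by (simp add: psi1_def GG_def)
  finally show ?thesis by (simp add: Psi_def Phi_def)
qed

lemma cont_Phi: "continuous_on (UNIV - PP) (Phi m s)"
proof -
  have "continuous_on (UNIV - PP) (GG s)"
    unfolding GG_def
  proof (rule cont_sgnmax[OF cont_KK cont_zz])
    show "open (UNIV - PP)" using closed_PP by (simp add: open_Diff)
    show "\<forall>x\<in>UNIV - PP. zz x = 0 \<longrightarrow> s * KK x < 0"
      using s0 by (auto simp: PP_def mult_less_0_iff)
  qed
  then show ?thesis unfolding Phi_def by (intro continuous_intros)
qed

lemma cont_Psi: "continuous_on (UNIV - Dl m s) (Psi m s)"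
proof -
  have "continuous_on (UNIV - Dl m s) (GG s)"
    unfolding GG_def
  proof (rule cont_sgnmax[OF cont_KK cont_zz])
    show "open (UNIV - Dl m s)" using closed_Dl by (simp add: open_Diff)
    show "\<forall>x\<in>UNIV - Dl m s. zz x = 0 \<longrightarrow> s * KK x < 0"
      using s0 m0 by (auto simp: Dl_def mult_less_0_iff)
  qed
  then show ?thesis unfolding Psi_def by (intro continuous_intros)
qed

lemma homeo: "homeomorphism (UNIV - PP) (UNIV - Dl m s) (Phi m s) (Psi m s)"
  by (rule homeomorphismI[OF cont_Phi cont_Psi]) (auto simp: Phi_out Psi_out Psi_Phi Phi_Psi)

end
end

definition affb :: "(real^2 \<Rightarrow> real) \<Rightarrow> real \<Rightarrow> bool" where
  "affb f B \<longleftrightarrow> (\<exists>a c. norm a \<le> B \<and> (\<forall>x. f x = a \<bullet> x + c))"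

lemma affb_const: "B \<ge> 0 \<Longrightarrow> affb (\<lambda>x. c) B"
  unfolding affb_def by (rule exI[of _ 0]) auto

lemma affb_inner: "affb (\<lambda>x. a \<bullet> (x - p)) (norm a)"
  unfolding affb_def by (rule exI[of _ a], rule exI[of _ "- (a \<bullet> p)"]) (auto simp: inner_diff_right)

lemma affb_add: assumes "affb f B1" "affb g B2" shows "affb (\<lambda>x. f x + g x) (B1 + B2)"
proof -
  obtain a c where 1: "norm a \<le> B1" "\<forall>x. f x = a \<bullet> x + c" using assms(1) unfolding affb_def by blast
  obtain a' c' where 2: "norm a' \<le> B2" "\<forall>x. g x = a' \<bullet> x + c'" using assms(2) unfolding affb_def by blast
  have "norm (a + a') \<le> B1 + B2" using 1 2 norm_triangle_ineq[of a a'] by linarith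
  moreover have "\<forall>x. f x + g x = (a + a') \<bullet> x + (c + c')" using 1 2 by (simp add: inner_add_left)
  ultimately show ?thesis unfolding affb_def by blast
qed

lemma affb_scale: assumes "affb f B" shows "affb (\<lambda>x. r * f x) (\<bar>r\<bar> * B)"
proof -
  obtain a c where 1: "norm a \<le> B" "\<forall>x. f x = a \<bullet> x + c" using assms(1) unfolding affb_def by blast
  have "norm (r *\<^sub>R a) \<le> \<bar>r\<bar> * B" using 1 by (simp add: mult_left_mono)
  moreover have "\<forall>x. r * f x = (r *\<^sub>R a) \<bullet> x + r * c" using 1 by (simp add: algebra_simps)
  ultimately show ?thesis unfolding affb_def by blast
qed

lemma affb_mono: "affb f B \<Longrightarrow> B \<le> B' \<Longrightarrow> affb f B'"
  unfolding affb_def by force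

lemma affb_poly: "affb f B \<Longrightarrow> polyhedron {x. f x \<le> 0}"
proof -
  assume "affb f B"
  then obtain a c where h: "\<forall>x. f x = a \<bullet> x + c" unfolding affb_def by blast
  have "{x. f x \<le> 0} = {x. a \<bullet> x \<le> - c}" using h by auto
  then show ?thesis using polyhedron_halfspace_le by simp
qed

lemma affb_lin:
  fixes e :: "real^2"
  assumes "affb g B" "norm e = 1" "m \<ge> 0"
  shows "\<exists>A c. linear A \<and> onorm A \<le> m * B \<and> (\<forall>x. (m * g x) *\<^sub>R e = A x + c)"
proof -
  obtain a c where h: "norm a \<le> B" "\<forall>x. g x = a \<bullet> x + c" using assms(1) unfolding affb_def by blast
  let ?A = "\<lambda>y. (m * (a \<bullet> y)) *\<^sub>R e"
  have "linear ?A" by (rule linearI) (auto simp: inner_add_right algebra_simps)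
  moreover have "onorm ?A \<le> m * B"
  proof (rule onorm_le)
    fix y
    have "norm (?A y) = m * \<bar>a \<bullet> y\<bar>" using assms(2,3) by (simp add: abs_mult)
    also have "\<dots> \<le> m * (norm a * norm y)" using assms(3) Cauchy_Schwarz_ineq2 by (intro mult_left_mono) auto
    also have "\<dots> \<le> m * (B * norm y)" using h(1) assms(3) by (intro mult_left_mono mult_right_mono) auto
    finally show "norm (?A y) \<le> m * B * norm y" by simp
  qed
  moreover have "\<forall>x. (m * g x) *\<^sub>R e = ?A x + (m * c) *\<^sub>R e" using h(2) by (simp add: algebra_simps)
  ultimately show ?thesis by blast
qed

lemma affb_lc: "affb f B1 \<Longrightarrow> affb g B2 \<Longrightarrow> \<bar>r1\<bar> * B1 + \<bar>r2\<bar> * B2 \<le> B \<Longrightarrow> affb (\<lambda>x. r1 * f x + r2 * g x) B"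
  by (rule affb_mono[OF affb_add[OF affb_scale affb_scale]])

lemma linear_id_plus: "linear A \<Longrightarrow> linear (\<lambda>y. y + A y)"
  unfolding linear_iff by (simp add: linear_add linear_scale algebra_simps)

context vconf begin

definition "KL x = 1 + sg x / ra"
definition "ZL x = ta x - al * sg x"
definition "KR x = 1 - sg x / rc"
definition "ZR x = ta x - be * sg x"
definition "Bd s = s * (1 / ra + 1 / rc) + 1 + \<bar>al\<bar> + \<bar>be\<bar>"

lemma side_L: "sg x \<le> 0 \<Longrightarrow> KK x = KL x \<and> zz x = ZL x"
  by (simp add: KK_def KL_def kk_def zz_def ZL_def ff_def max_def)

lemma side_R: "sg x \<ge> 0 \<Longrightarrow> KK x = KR x \<and> zz x = ZR x"
  by (simp add: KK_def KR_def kk_def zz_def ZR_def ff_def max_def algebra_simps)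

lemma norm_n: "norm n = 1" using nn by (simp add: norm_eq_sqrt_inner)
lemma norm_e: "norm e = 1" using ee by (simp add: norm_eq_sqrt_inner)

lemma affb_sg: "affb sg 1" using affb_inner[of n b] norm_n unfolding sg_def by simp
lemma affb_ta: "affb ta 1" using affb_inner[of e b] norm_e unfolding ta_def by simp

lemma affb_KL: "affb KL (1 / ra)"
  using affb_add[OF affb_const[of 0 1] affb_scale[OF affb_sg, of "1/ra"]] ra unfolding KL_def
  by (simp add: field_simps)
lemma affb_KR: "affb KR (1 / rc)"
  using affb_add[OF affb_const[of 0 1] affb_scale[OF affb_sg, of "-1/rc"]] rc unfolding KR_def
  by (simp add: field_simps)
lemma affb_ZL: "affb ZL (1 + \<bar>al\<bar>)"
  using affb_lc[OF affb_ta affb_sg, of 1 "- al" "1 + \<bar>al\<bar>"] unfolding ZL_def by simp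
lemma affb_ZR: "affb ZR (1 + \<bar>be\<bar>)"
  using affb_lc[OF affb_ta affb_sg, of 1 "- be" "1 + \<bar>be\<bar>"] unfolding ZR_def by simp

lemma side_pieces:
  assumes h: "affb hh Bh" and K: "affb Kj BK" and Z: "affb Zj BZ"
    and eq: "\<forall>x. hh x \<le> 0 \<longrightarrow> KK x = Kj x \<and> zz x = Zj x" and s: "s > 0" and B: "s * BK + BZ \<le> B"
  shows "\<exists>Q. finite Q \<and> (\<forall>P\<in>Q. polyhedron P) \<and> {x. hh x \<le> 0} \<subseteq> \<Union>Q \<and>
           (\<forall>P\<in>Q. \<exists>g. affb g B \<and> (\<forall>x\<in>P - PP. GG s x = g x))"
proof -
  have B0: "B \<ge> 0"
  proof -
    obtain a c where "norm a \<le> BK" "\<forall>x. Kj x = a \<bullet> x + c" using K unfolding affb_def by blast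
    moreover obtain a' c' where "norm a' \<le> BZ" "\<forall>x. Zj x = a' \<bullet> x + c'" using Z unfolding affb_def by blast
    ultimately have "BK \<ge> 0" "BZ \<ge> 0" using norm_ge_zero order_trans by blast+
    then show ?thesis using s B by (smt (verit) mult_nonneg_nonneg)
  qed
  define H where "H = {x. hh x \<le> 0}"
  define P1 where "P1 = H \<inter> {x. (-1) * Zj x + 0 * Kj x \<le> 0} \<inter> {x. 1 * Zj x + (- s) * Kj x \<le> 0}"
  define P2 where "P2 = H \<inter> {x. 1 * Zj x + 0 * Kj x \<le> 0} \<inter> {x. (-1) * Zj x + (- s) * Kj x \<le> 0}"
  define P3 where "P3 = H \<inter> {x. (-1) * Zj x + s * Kj x \<le> 0}"
  define P4 where "P4 = H \<inter> {x. 1 * Zj x + s * Kj x \<le> 0}"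
  have pl: "polyhedron {x. r1 * Zj x + r2 * Kj x \<le> 0}" for r1 r2
    by (rule affb_poly[OF affb_lc[OF Z K order_refl]])
  have pH: "polyhedron H" unfolding H_def by (rule affb_poly[OF h])
  have "polyhedron P1" unfolding P1_def by (intro polyhedron_Int pl pH)
  moreover have "polyhedron P2" unfolding P2_def by (intro polyhedron_Int pl pH)
  moreover have "polyhedron P3" unfolding P3_def by (intro polyhedron_Int pl pH)
  moreover have "polyhedron P4" unfolding P4_def by (intro polyhedron_Int pl pH)
  ultimately have poly: "\<forall>P\<in>{P1,P2,P3,P4}. polyhedron P" by blast
  have cov: "H \<subseteq> P1 \<union> P2 \<union> P3 \<union> P4"
    unfolding P1_def P2_def P3_def P4_def by auto
  have g1: "affb (\<lambda>x. s * Kj x + (-1) * Zj x) B" using affb_lc[OF K Z, of s "-1" B] s B by simp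
  have g2: "affb (\<lambda>x. (-s) * Kj x + (-1) * Zj x) B" using affb_lc[OF K Z, of "-s" "-1" B] s B by simp
  have g0: "affb (\<lambda>x. 0) B" using affb_const B0 by blast
  have v1: "GG s x = s * Kj x + (-1) * Zj x" if "x \<in> P1 - PP" for x
  proof -
    have x: "KK x = Kj x" "zz x = Zj x" "zz x \<ge> 0" "zz x \<le> s * KK x" "\<not> (KK x \<ge> 0 \<and> zz x = 0)"
      using that eq unfolding P1_def H_def PP_def by auto
    have "zz x \<noteq> 0" using x s by (auto simp: zero_le_mult_iff)
    then have "zz x > 0" using x by linarith
    then show ?thesis using x by (simp add: GG_def)
  qed
  have v2: "GG s x = (-s) * Kj x + (-1) * Zj x" if "x \<in> P2 - PP" for x
  proof -
    have x: "KK x = Kj x" "zz x = Zj x" "zz x \<le> 0" "- zz x \<le> s * KK x" "\<not> (KK x \<ge> 0 \<and> zz x = 0)"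
      using that eq unfolding P2_def H_def PP_def by auto
    have "zz x \<noteq> 0" using x s by (auto simp: zero_le_mult_iff)
    then have "zz x < 0" using x by linarith
    then show ?thesis using x by (simp add: GG_def)
  qed
  have v3: "GG s x = 0" if "x \<in> P3 - PP" for x
  proof -
    have x: "s * KK x - zz x \<le> 0" using that eq unfolding P3_def H_def by auto
    then have "s * KK x - \<bar>zz x\<bar> \<le> 0" by linarith
    then show ?thesis by (simp add: GG_def)
  qed
  have v4: "GG s x = 0" if "x \<in> P4 - PP" for x
  proof -
    have x: "s * KK x + zz x \<le> 0" using that eq unfolding P4_def H_def by auto
    then have "s * KK x - \<bar>zz x\<bar> \<le> 0" by linarith
    then show ?thesis by (simp add: GG_def)
  qed
  have e1: "\<exists>g. affb g B \<and> (\<forall>x\<in>P1 - PP. GG s x = g x)"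
    by (rule exI[of _ "\<lambda>x. s * Kj x + (-1) * Zj x"]) (intro conjI ballI g1, erule v1)
  have e2: "\<exists>g. affb g B \<and> (\<forall>x\<in>P2 - PP. GG s x = g x)"
    by (rule exI[of _ "\<lambda>x. (-s) * Kj x + (-1) * Zj x"]) (intro conjI ballI g2, erule v2)
  have e3: "\<exists>g. affb g B \<and> (\<forall>x\<in>P3 - PP. GG s x = g x)"
    by (rule exI[of _ "\<lambda>x. 0"]) (intro conjI ballI g0, erule v3)
  have e4: "\<exists>g. affb g B \<and> (\<forall>x\<in>P4 - PP. GG s x = g x)"
    by (rule exI[of _ "\<lambda>x. 0"]) (intro conjI ballI g0, erule v4)
  have "finite {P1,P2,P3,P4}" by simp
  moreover have "{x. hh x \<le> 0} \<subseteq> \<Union>{P1,P2,P3,P4}" using cov unfolding H_def by (simp add: Un_assoc)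
  moreover have "\<forall>P\<in>{P1,P2,P3,P4}. \<exists>g. affb g B \<and> (\<forall>x\<in>P - PP. GG s x = g x)"
    using e1 e2 e3 e4 by simp
  ultimately show ?thesis using poly by blast
qed

end

context vconf begin

lemma all_pieces:
  assumes s: "s > 0"
  shows "\<exists>Q. finite Q \<and> (\<forall>P\<in>Q. polyhedron P) \<and> UNIV \<subseteq> \<Union>Q \<and>
           (\<forall>P\<in>Q. \<exists>g. affb g (Bd s) \<and> (\<forall>x\<in>P - PP. GG s x = g x))"
proof -
  have b1: "s * (1 / ra) + (1 + \<bar>al\<bar>) \<le> Bd s" using s rc unfolding Bd_def by (simp add: algebra_simps)
  have b2: "s * (1 / rc) + (1 + \<bar>be\<bar>) \<le> Bd s" using s ra unfolding Bd_def by (simp add: algebra_simps)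
  obtain Q1 where Q1: "finite Q1" "\<forall>P\<in>Q1. polyhedron P" "{x. sg x \<le> 0} \<subseteq> \<Union>Q1"
     "\<forall>P\<in>Q1. \<exists>g. affb g (Bd s) \<and> (\<forall>x\<in>P - PP. GG s x = g x)"
    using side_pieces[OF affb_sg affb_KL affb_ZL _ s b1] side_L by blast
  have hR: "affb (\<lambda>x. (-1) * sg x) 1" using affb_scale[OF affb_sg, of "-1"] by simp
  obtain Q2 where Q2: "finite Q2" "\<forall>P\<in>Q2. polyhedron P" "{x. (-1) * sg x \<le> 0} \<subseteq> \<Union>Q2"
     "\<forall>P\<in>Q2. \<exists>g. affb g (Bd s) \<and> (\<forall>x\<in>P - PP. GG s x = g x)"
    using side_pieces[OF hR affb_KR affb_ZR _ s b2] side_R by force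
  have "UNIV \<subseteq> \<Union>(Q1 \<union> Q2)"
  proof
    fix x :: "real^2"
    show "x \<in> \<Union>(Q1 \<union> Q2)"
    proof (cases "sg x \<le> 0")
      case True then show ?thesis using Q1(3) by blast
    next
      case False then have "(-1) * sg x \<le> 0" by simp
      then show ?thesis using Q2(3) by blast
    qed
  qed
  then show ?thesis using Q1 Q2 by (intro exI[of _ "Q1 \<union> Q2"]) auto
qed

lemma pw_Phi:
  assumes m: "m \<ge> 0" and s: "s > 0"
  shows "piecewise_affine_on (UNIV - PP) (Phi m s)"
proof -
  obtain Q where Q: "finite Q" "\<forall>P\<in>Q. polyhedron P" "UNIV \<subseteq> \<Union>Q"
     "\<forall>P\<in>Q. \<exists>g. affb g (Bd s) \<and> (\<forall>x\<in>P - PP. GG s x = g x)"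
    using all_pieces[OF s] by blast
  have "\<forall>P\<in>Q. \<exists>A b. linear A \<and> (\<forall>x\<in>P \<inter> (UNIV - PP). Phi m s x = A x + b)"
  proof
    fix P assume "P \<in> Q"
    then obtain g where g: "affb g (Bd s)" "\<forall>x\<in>P - PP. GG s x = g x" using Q(4) by blast
    obtain A c where A: "linear A" "\<forall>x. (m * g x) *\<^sub>R e = A x + c" using affb_lin[OF g(1) norm_e m] by blast
    have h: "\<forall>x\<in>P \<inter> (UNIV - PP). Phi m s x = (x + A x) + c"
      using g(2) A(2) by (auto simp: Phi_def)
    show "\<exists>A b. linear A \<and> (\<forall>x\<in>P \<inter> (UNIV - PP). Phi m s x = A x + b)"
      apply (rule exI[of _ "\<lambda>y. y + A y"], rule exI[of _ c])
      using linear_id_plus[OF A(1)] h by simp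
  qed
  then show ?thesis unfolding piecewise_affine_on_def
    apply (intro exI[of _ Q])
    using Q(1,2,3) by blast
qed

lemma ae_grad:
  assumes m: "m \<ge> 0" and s: "s > 0"
  shows "AE x in lebesgue_on (UNIV - PP). (\<lambda>x. Phi m s x - x) differentiable (at x) \<and>
      ereal (onorm (frechet_derivative (\<lambda>x. Phi m s x - x) (at x))) \<le> ereal (m * Bd s)"
proof -
  obtain Q where Q: "finite Q" "\<forall>P\<in>Q. polyhedron P" "UNIV \<subseteq> \<Union>Q"
     "\<forall>P\<in>Q. \<exists>g. affb g (Bd s) \<and> (\<forall>x\<in>P - PP. GG s x = g x)"
    using all_pieces[OF s] by blast
  show ?thesis
  proof (rule ae_pw)
    show "open (UNIV - PP)" using closed_PP by (simp add: open_Diff)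
    show "finite Q" by fact
    show "\<forall>P\<in>Q. convex P" using Q(2) polyhedron_imp_convex by blast
    show "UNIV - PP \<subseteq> \<Union>Q" using Q(3) by blast
    show "\<forall>P\<in>Q. \<exists>A c. linear A \<and> onorm A \<le> m * Bd s \<and> (\<forall>x\<in>P \<inter> (UNIV - PP). Phi m s x - x = A x + c)"
    proof
      fix P assume "P \<in> Q"
      then obtain g where g: "affb g (Bd s)" "\<forall>x\<in>P - PP. GG s x = g x" using Q(4) by blast
      obtain A c where A: "linear A" "onorm A \<le> m * Bd s" "\<forall>x. (m * g x) *\<^sub>R e = A x + c"
        using affb_lin[OF g(1) norm_e m] by blast
      have "\<forall>x\<in>P \<inter> (UNIV - PP). Phi m s x - x = A x + c"
        using g(2) A(3) by (auto simp: Phi_def)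
      then show "\<exists>A c. linear A \<and> onorm A \<le> m * Bd s \<and> (\<forall>x\<in>P \<inter> (UNIV - PP). Phi m s x - x = A x + c)"
        apply (intro exI[of _ A] exI[of _ c])
        using A(1,2) by simp
    qed
  qed
qed

lemma kk_le1: "kk t \<le> 1"
  using ra rc by (cases "t \<le> 0") (auto simp: kk_def max_def field_simps)

lemma norm_disp: assumes "m \<ge> 0" "s > 0" shows "norm (Phi m s x - x) \<le> m * s"
proof -
  have "\<bar>GG s x\<bar> \<le> s"
  proof -
    have "\<bar>GG s x\<bar> \<le> max 0 (s * KK x - \<bar>zz x\<bar>)" unfolding GG_def by (simp add: abs_mult abs_sgn_eq)
    also have "\<dots> \<le> s"
    proof -
      have "s * KK x \<le> s * 1" unfolding KK_def using kk_le1[of "sg x"] assms by (intro mult_left_mono) auto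
      then have "s * KK x - \<bar>zz x\<bar> \<le> s" by linarith
      then show ?thesis using assms by simp
    qed
    finally show ?thesis .
  qed
  then show ?thesis using assms norm_e by (simp add: Phi_def abs_mult mult_left_mono)
qed

lemma disp_nbhd:
  assumes "m \<ge> 0" "s > 0" "s \<le> d" "Phi m s x \<noteq> x"
  shows "x \<in> nbhd PP d"
proof -
  have "GG s x \<noteq> 0" using assms(4) by (auto simp: Phi_def)
  then have h: "s * KK x - \<bar>zz x\<bar> > 0" unfolding GG_def by (auto simp: max_def split: if_splits)
  define p where "p = x - zz x *\<^sub>R e"
  have "zz p = 0" "KK p = KK x" unfolding p_def by simp_all
  moreover have "KK x > 0"
  proof -
    have "s * KK x > 0" using h by linarith
    then show ?thesis using assms(2) by (simp add: zero_less_mult_iff)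
  qed
  ultimately have pP: "p \<in> PP" by (simp add: PP_def)
  have "s * KK x \<le> s * 1" unfolding KK_def using kk_le1[of "sg x"] assms by (intro mult_left_mono) auto
  then have "\<bar>zz x\<bar> < s" using h by linarith
  then have "zz x *\<^sub>R e \<in> ball 0 d" using norm_e assms(3) by simp
  moreover have "x = p + zz x *\<^sub>R e" by (simp add: p_def)
  ultimately show ?thesis using pP unfolding nbhd_def by blast
qed

end

lemma two_ne_one[simp]: "(2::2) \<noteq> 1" by simp

lemma J_inner: "J v \<bullet> J w = v \<bullet> w" by (simp add: inner2 algebra_simps)
lemma J_orth: "J v \<bullet> v = 0" by (simp add: inner2 algebra_simps)
lemma J_orth2: "v \<bullet> J v = 0" by (simp add: inner2 algebra_simps)
lemma JJ: "J (J v) = - v" by (simp add: vec_eq_iff forall_2)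
lemma J_add: "J (v + w) = J v + J w" by (simp add: vec_eq_iff forall_2)
lemma J_scale: "J (r *\<^sub>R v) = r *\<^sub>R J v" by (simp add: vec_eq_iff forall_2)
lemma J_diff: "J (v - w) = J v - J w" by (simp add: vec_eq_iff forall_2)
lemma J_minus: "J (- v) = - J v" by (simp add: vec_eq_iff forall_2)

lemma graph_local:
  fixes U :: "(real^2) set" and v x :: "real^2"
  assumes vv: "v \<bullet> v = 1" and cc: "c * c = 1" and Lh: "L-lipschitz_on UNIV h" and r: "r > 0"
    and eq: "\<forall>y\<in>ball x r. (y \<in> U \<longleftrightarrow> (c *\<^sub>R J v) \<bullet> (y - x) < h (v \<bullet> (y - x)))"
  shows "\<exists>r>0. \<exists>R::real^2 \<Rightarrow> real^2. \<exists>h::real \<Rightarrow> real. \<exists>L.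
        orthogonal_transformation R \<and> L-lipschitz_on UNIV h \<and>
        U \<inter> ball x r = {y \<in> ball x r. (R (y - x)) $ 2 < h ((R (y - x)) $ 1)}"
proof -
  define R :: "real^2 \<Rightarrow> real^2" where "R y = (\<chi> i. if i = 1 then v \<bullet> y else (c *\<^sub>R J v) \<bullet> y)" for y
  have R1: "R y $ 1 = v \<bullet> y" and R2: "R y $ 2 = (c *\<^sub>R J v) \<bullet> y" for y by (simp_all add: R_def)
  have lin: "linear R"
    by (rule linearI) (simp_all add: vec_eq_iff forall_2 R1 R2 inner_add_right)
  have vv2: "v$1 * v$1 + v$2 * v$2 = 1" using vv by (simp add: inner2)
  have "R y \<bullet> R w = y \<bullet> w" for y w
  proof -
    have "R y \<bullet> R w = (v \<bullet> y) * (v \<bullet> w) + (c * c) * ((J v \<bullet> y) * (J v \<bullet> w))"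
      by (simp add: inner2[of "R y"] R1 R2 algebra_simps)
    also have "\<dots> = (v$1 * v$1 + v$2 * v$2) * (y \<bullet> w)"
      unfolding cc by (simp add: inner2 algebra_simps)
    finally show ?thesis using vv2 by simp
  qed
  then have "orthogonal_transformation R" using lin by (simp add: orthogonal_transformation_def)
  moreover have "U \<inter> ball x r = {y \<in> ball x r. (R (y - x)) $ 2 < h ((R (y - x)) $ 1)}"
    using eq by (auto simp: R1 R2)
  ultimately show ?thesis using Lh r by blast
qed

lemma lip_pl:
  fixes c0 c1 c2 d :: real
  shows "(\<bar>c1\<bar> + \<bar>c2\<bar>)-lipschitz_on UNIV (\<lambda>t. c0 + c1 * t + c2 * max (t + d) 0)"
proof (rule lipschitz_onI)
  fix x y :: real
  have m: "\<bar>max (x + d) 0 - max (y + d) 0\<bar> \<le> \<bar>x - y\<bar>" by (simp add: max_def abs_if)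
  have "dist (c0 + c1 * x + c2 * max (x + d) 0) (c0 + c1 * y + c2 * max (y + d) 0)
      = \<bar>c1 * (x - y) + c2 * (max (x + d) 0 - max (y + d) 0)\<bar>" by (simp add: dist_real_def algebra_simps)
  also have "\<dots> \<le> \<bar>c1\<bar> * \<bar>x - y\<bar> + \<bar>c2\<bar> * \<bar>max (x + d) 0 - max (y + d) 0\<bar>"
    by (rule order_trans[OF abs_triangle_ineq]) (simp add: abs_mult)
  also have "\<dots> \<le> \<bar>c1\<bar> * \<bar>x - y\<bar> + \<bar>c2\<bar> * \<bar>x - y\<bar>"
    using m by (simp add: mult_left_mono)
  finally show "dist (c0 + c1 * x + c2 * max (x + d) 0) (c0 + c1 * y + c2 * max (y + d) 0) \<le> (\<bar>c1\<bar> + \<bar>c2\<bar>) * dist x y"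
    by (simp add: dist_real_def algebra_simps)
qed simp

lemma tip_local:
  fixes U :: "(real^2) set" and v x :: "real^2"
  assumes vv: "v \<bullet> v = 1" and cc: "c * c = 1" and g: "\<gamma> > 0" and r: "r > 0"
    and eq: "\<forall>y\<in>ball x r. (y \<in> U \<longleftrightarrow> \<not> (v \<bullet> (y - x) \<ge> 0 \<and>
               \<bar>(c *\<^sub>R J v) \<bullet> (y - x) - \<alpha> * (v \<bullet> (y - x))\<bar> \<le> \<gamma> * (v \<bullet> (y - x))))"
  shows "\<exists>r>0. \<exists>R::real^2 \<Rightarrow> real^2. \<exists>h::real \<Rightarrow> real. \<exists>L.
        orthogonal_transformation R \<and> L-lipschitz_on UNIV h \<and>
        U \<inter> ball x r = {y \<in> ball x r. (R (y - x)) $ 2 < h ((R (y - x)) $ 1)}"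
proof -
  define e0 where "e0 = c *\<^sub>R J v"
  define N where "N = sqrt (1 + \<alpha> * \<alpha>)"
  have N0: "N > 0" unfolding N_def by (simp add: add_pos_nonneg)
  have NN: "N * N = 1 + \<alpha> * \<alpha>" unfolding N_def by (simp add: add_nonneg_nonneg)
  have A0: "1 + \<alpha> * \<alpha> > 0" by (simp add: add_pos_nonneg)
  have e0e0: "e0 \<bullet> e0 = 1" unfolding e0_def using vv cc by (simp add: J_inner algebra_simps)
  have e0v: "e0 \<bullet> v = 0" "v \<bullet> e0 = 0" unfolding e0_def by (simp_all add: J_orth J_orth2)
  define dp where "dp = (1 / N) *\<^sub>R (e0 - \<alpha> *\<^sub>R v)"
  define d where "d = (1 / N) *\<^sub>R (v + \<alpha> *\<^sub>R e0)"
  have dpdp: "dp \<bullet> dp = 1"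
  proof -
    have "dp \<bullet> dp = (1 / N) * (1 / N) * (e0 \<bullet> e0 - 2 * \<alpha> * (e0 \<bullet> v) + \<alpha> * \<alpha> * (v \<bullet> v))"
      unfolding dp_def by (simp add: inner_diff_left inner_diff_right inner_commute algebra_simps)
    also have "\<dots> = 1" using e0e0 e0v vv NN N0 A0 by (simp add: field_simps)
    finally show ?thesis .
  qed
  have ccz: "c * (c * z) = z" for z using cc by (simp add: mult.assoc[symmetric])
  have cd: "((- c) *\<^sub>R J dp) = d"
    unfolding vec_eq_iff forall_2 d_def dp_def e0_def
    by (simp add: algebra_simps ccz)
  define h where "h q = 0 + (\<alpha> - (1 + \<alpha> * \<alpha>) / \<gamma>) * q + (2 * (1 + \<alpha> * \<alpha>) / \<gamma>) * max (q + 0) 0" for q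
  have habs: "h q = \<alpha> * q + (1 + \<alpha> * \<alpha>) * \<bar>q\<bar> / \<gamma>" for q
    unfolding h_def using g by (cases "q \<ge> 0") (simp_all add: max_def field_simps)
  have Lh: "(\<bar>\<alpha> - (1 + \<alpha> * \<alpha>) / \<gamma>\<bar> + \<bar>2 * (1 + \<alpha> * \<alpha>) / \<gamma>\<bar>)-lipschitz_on UNIV h"
    unfolding h_def[abs_def] by (rule lip_pl)
  have key: "(y \<in> U \<longleftrightarrow> ((- c) *\<^sub>R J dp) \<bullet> (y - x) < h (dp \<bullet> (y - x)))" if y: "y \<in> ball x r" for y
  proof -
    define s' where "s' = v \<bullet> (y - x)"
    define t' where "t' = e0 \<bullet> (y - x)"
    have p: "d \<bullet> (y - x) = (s' + \<alpha> * t') / N" unfolding d_def s'_def t'_def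
      by (simp add: inner_add_left divide_simps)
    have q: "dp \<bullet> (y - x) = (t' - \<alpha> * s') / N" unfolding dp_def s'_def t'_def
      by (simp add: inner_diff_left divide_simps)
    have pq: "(s' + \<alpha> * t') / N - \<alpha> * ((t' - \<alpha> * s') / N) = N * s'"
    proof -
      have "(s' + \<alpha> * t') / N - \<alpha> * ((t' - \<alpha> * s') / N) = ((1 + \<alpha> * \<alpha>) * s') / N"
        using N0 by (simp add: field_simps)
      also have "\<dots> = ((N * N) * s') / N" using NN by simp
      also have "\<dots> = N * s'" using N0 by simp
      finally show ?thesis .
    qed
    have aq: "\<bar>(t' - \<alpha> * s') / N\<bar> = \<bar>t' - \<alpha> * s'\<bar> / N" using N0 by simp
    have "(d \<bullet> (y - x) < h (dp \<bullet> (y - x))) \<longleftrightarrow>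
          N * s' < (1 + \<alpha> * \<alpha>) * (\<bar>t' - \<alpha> * s'\<bar> / N) / \<gamma>"
      unfolding p q habs aq using pq by (simp add: algebra_simps)
    also have "\<dots> \<longleftrightarrow> N * s' * N * \<gamma> < (1 + \<alpha> * \<alpha>) * \<bar>t' - \<alpha> * s'\<bar>"
      using N0 g by (simp add: field_simps)
    also have "\<dots> \<longleftrightarrow> \<gamma> * s' < \<bar>t' - \<alpha> * s'\<bar>"
    proof -
      have "N * s' * N * \<gamma> = (N * N) * (\<gamma> * s')" by (simp add: algebra_simps)
      then have e: "N * s' * N * \<gamma> = (1 + \<alpha> * \<alpha>) * (\<gamma> * s')" using NN by simp
      show ?thesis unfolding e by (rule mult_less_cancel_left_pos[OF A0])
    qed
    also have "\<dots> \<longleftrightarrow> \<not> (s' \<ge> 0 \<and> \<bar>t' - \<alpha> * s'\<bar> \<le> \<gamma> * s')"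
      using g by (auto simp: not_le) (smt (verit) mult_pos_neg abs_ge_zero)
    finally show ?thesis using eq y unfolding cd s'_def t'_def e0_def by blast
  qed
  show ?thesis
    by (rule graph_local[where c="-c", OF dpdp _ Lh r]) (use cc key in auto)
qed

context vconf begin

lemma sg_diff: "sg y = sg x + n \<bullet> (y - x)" by (simp add: sg_def inner_diff_right)
lemma ta_diff: "ta y = ta x + e \<bullet> (y - x)" by (simp add: ta_def inner_diff_right)
lemma n_bound: "\<bar>n \<bullet> (y - x)\<bar> \<le> dist x y"
  using Cauchy_Schwarz_ineq2[of n "y - x"] norm_n by (simp add: dist_norm norm_minus_commute)

lemma kk0: "kk t = 0 \<Longrightarrow> t = - ra \<or> t = rc"
  using ra rc by (cases "t \<le> 0") (auto simp: kk_def max_def field_simps)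

lemma open_KKz: "open {y. KK y > 0 \<and> f (KK y) (zz y) > (0::real)}" if "continuous_on UNIV (\<lambda>p::real\<times>real. f (fst p) (snd p))"
proof -
  have c: "continuous_on UNIV (\<lambda>y. f (KK y) (zz y))"
    using continuous_on_compose2[OF that continuous_on_Pair[OF cont_KK cont_zz]] by auto
  have "open {y. 0 < KK y}" using open_Collect_less[where f="\<lambda>y. 0" and g=KK, OF continuous_on_const cont_KK] by simp
  moreover have "open {y. 0 < f (KK y) (zz y)}" using open_Collect_less[where f="\<lambda>y. 0" and g="\<lambda>y. f (KK y) (zz y)", OF continuous_on_const c] by simp
  ultimately show ?thesis by (simp add: Collect_conj_eq open_Int)
qed

lemma lipdom_frontier:
  assumes U_def: "U = UNIV - {x. KK x \<ge> 0 \<and> \<bar>zz x\<bar> \<le> w * KK x}"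
  assumes w: "w > 0" and x: "x \<in> frontier U"
  shows "\<exists>r>0. \<exists>R::real^2 \<Rightarrow> real^2. \<exists>h::real \<Rightarrow> real. \<exists>L.
        orthogonal_transformation R \<and> L-lipschitz_on UNIV h \<and>
        U \<inter> ball x r = {y \<in> ball x r. (R (y - x)) $ 2 < h ((R (y - x)) $ 1)}"
proof -
  have cD: "closed {x. KK x \<ge> 0 \<and> \<bar>zz x\<bar> \<le> w * KK x}" using cont_KK cont_zz
    by (intro closed_Collect_conj closed_Collect_le continuous_intros) auto
  then have oU: "open U" unfolding U_def by (simp add: open_Diff)
  have xU: "x \<notin> U" and xc: "x \<in> closure U" using x oU unfolding frontier_def
    by (auto simp: interior_open)
  then have xD: "KK x \<ge> 0" "\<bar>zz x\<bar> \<le> w * KK x" unfolding U_def by auto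
  have ee1: "e = 1 *\<^sub>R J n" by (simp add: e_def)
  consider "KK x = 0" | "KK x > 0" "\<bar>zz x\<bar> < w * KK x" | "KK x > 0" "zz x = w * KK x" | "KK x > 0" "zz x = - w * KK x"
    using xD by linarith
  then show ?thesis
  proof cases
    case 1
    then have z0: "zz x = 0" using xD by simp
    from kk0[of "sg x"] 1 consider "sg x = - ra" | "sg x = rc" unfolding KK_def by blast
    then show ?thesis
    proof cases
      case 1
      have tx: "ta x = al * sg x" using z0 side_L[of x] 1 ra by (simp add: ZL_def)
      have "\<forall>y\<in>ball x ra. (y \<in> U \<longleftrightarrow> \<not> (n \<bullet> (y - x) \<ge> 0 \<and>
               \<bar>(1 *\<^sub>R J n) \<bullet> (y - x) - al * (n \<bullet> (y - x))\<bar> \<le> w / ra * (n \<bullet> (y - x))))"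
        proof
          fix y assume "y \<in> ball x ra"
          then have "\<bar>n \<bullet> (y - x)\<bar> < ra" using n_bound[of y x] by simp
          then have "sg y \<le> 0" using sg_diff[of y x] 1 by linarith
          then have K: "KK y = (n \<bullet> (y - x)) / ra" and Z: "zz y = e \<bullet> (y - x) - al * (n \<bullet> (y - x))"
            using side_L[of y] sg_diff[of y x] ta_diff[of y x] 1 tx ra
            by (auto simp: KL_def ZL_def field_simps)
          have "KK y \<ge> 0 \<longleftrightarrow> n \<bullet> (y - x) \<ge> 0" unfolding K using ra by (simp add: zero_le_divide_iff)
          moreover have "w * KK y = w / ra * (n \<bullet> (y - x))" unfolding K by simp
          ultimately show "(y \<in> U \<longleftrightarrow> \<not> (n \<bullet> (y - x) \<ge> 0 \<and>
               \<bar>(1 *\<^sub>R J n) \<bullet> (y - x) - al * (n \<bullet> (y - x))\<bar> \<le> w / ra * (n \<bullet> (y - x))))"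
            unfolding U_def using Z by (simp add: e_def)
        qed
      then show ?thesis using tip_local[where v=n and c=1 and \<gamma>="w / ra" and \<alpha>=al and r=ra and U=U] nn ra w
        by simp
    next
      case 2
      have tx: "ta x = be * sg x" using z0 side_R[of x] 2 rc by (simp add: ZR_def)
      have "\<forall>y\<in>ball x rc. (y \<in> U \<longleftrightarrow> \<not> ((-n) \<bullet> (y - x) \<ge> 0 \<and>
               \<bar>((-1) *\<^sub>R J (-n)) \<bullet> (y - x) - (-be) * ((-n) \<bullet> (y - x))\<bar> \<le> w / rc * ((-n) \<bullet> (y - x))))"
        proof
          fix y assume "y \<in> ball x rc"
          then have "\<bar>n \<bullet> (y - x)\<bar> < rc" using n_bound[of y x] by simp
          then have "sg y \<ge> 0" using sg_diff[of y x] 2 by linarith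
          then have K: "KK y = - (n \<bullet> (y - x)) / rc" and Z: "zz y = e \<bullet> (y - x) - be * (n \<bullet> (y - x))"
            using side_R[of y] sg_diff[of y x] ta_diff[of y x] 2 tx rc
            by (auto simp: KR_def ZR_def field_simps)
          have "KK y \<ge> 0 \<longleftrightarrow> (-n) \<bullet> (y - x) \<ge> 0" unfolding K using rc by (simp add: zero_le_divide_iff divide_le_0_iff)
          moreover have "w * KK y = w / rc * ((-n) \<bullet> (y - x))" unfolding K by simp
          moreover have "((-1) *\<^sub>R J (-n)) \<bullet> (y - x) - (-be) * ((-n) \<bullet> (y - x)) = zz y"
            unfolding Z e_def by (simp add: J_minus)
          ultimately show "(y \<in> U \<longleftrightarrow> \<not> ((-n) \<bullet> (y - x) \<ge> 0 \<and>
               \<bar>((-1) *\<^sub>R J (-n)) \<bullet> (y - x) - (-be) * ((-n) \<bullet> (y - x))\<bar> \<le> w / rc * ((-n) \<bullet> (y - x))))"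
            unfolding U_def by simp
        qed
      moreover have "(-n) \<bullet> (-n) = 1" using nn by simp
      ultimately show ?thesis using tip_local[where v="-n" and c="-1" and \<gamma>="w / rc" and \<alpha>="-be" and r=rc and U=U] rc w
        by simp
    qed
  next
    case 2
    define Ob where "Ob = {y. KK y > 0 \<and> (\<lambda>a b. w * a - \<bar>b\<bar>) (KK y) (zz y) > 0}"
    have "open Ob" unfolding Ob_def by (rule open_KKz) (intro continuous_intros)
    moreover have "x \<in> Ob" using 2 unfolding Ob_def by simp
    moreover have "Ob \<inter> U = {}" unfolding Ob_def U_def by auto
    ultimately have "x \<notin> closure U" using open_Int_closure_eq_empty by blast
    then show ?thesis using xc by blast
  next
    case 3
    define Ob where "Ob = {y. KK y > 0 \<and> (\<lambda>a b. b + w * a) (KK y) (zz y) > 0}"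
    have "open Ob" unfolding Ob_def by (rule open_KKz) (intro continuous_intros)
    moreover have "x \<in> Ob" using 3 w unfolding Ob_def by simp
    ultimately obtain r where r: "r > 0" "ball x r \<subseteq> Ob" using open_contains_ball by blast
    define c1 where "c1 = - al - w / ra"
    define c2 where "c2 = - (be - al) + w * (1 / ra + 1 / rc)"
    define h where "h q = (ta x - al * sg x - w - w * sg x / ra) + c1 * q + c2 * max (q + sg x) 0" for q
    have hh: "h q = ta x - ff (sg x + q) - w * kk (sg x + q)" for q
      unfolding h_def ff_def kk_def c1_def c2_def by (simp add: algebra_simps add_divide_distrib)
    show ?thesis
    proof (rule graph_local[where v=n and c="-1" and h=h and r=r])
      show "n \<bullet> n = 1" by (rule nn)
      show "(-1::real) * -1 = 1" by simp
      show "(\<bar>c1\<bar> + \<bar>c2\<bar>)-lipschitz_on UNIV h" unfolding h_def[abs_def] by (rule lip_pl)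
      show "r > 0" by fact
      show "\<forall>y\<in>ball x r. (y \<in> U \<longleftrightarrow> ((-1) *\<^sub>R J n) \<bullet> (y - x) < h (n \<bullet> (y - x)))"
      proof
        fix y assume "y \<in> ball x r"
        then have yO: "KK y > 0" "zz y + w * KK y > 0" using r unfolding Ob_def by auto
        have "y \<in> U \<longleftrightarrow> zz y > w * KK y" unfolding U_def using yO by auto
        also have "\<dots> \<longleftrightarrow> ((-1) *\<^sub>R J n) \<bullet> (y - x) < h (n \<bullet> (y - x))"
          unfolding hh zz_def KK_def using sg_diff[of y x] ta_diff[of y x] by (simp add: e_def) linarith
        finally show "(y \<in> U \<longleftrightarrow> ((-1) *\<^sub>R J n) \<bullet> (y - x) < h (n \<bullet> (y - x)))" .
      qed
    qed
  next
    case 4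
    define Ob where "Ob = {y. KK y > 0 \<and> (\<lambda>a b. w * a - b) (KK y) (zz y) > 0}"
    have "open Ob" unfolding Ob_def by (rule open_KKz) (intro continuous_intros)
    moreover have "x \<in> Ob" using 4 w unfolding Ob_def by simp
    ultimately obtain r where r: "r > 0" "ball x r \<subseteq> Ob" using open_contains_ball by blast
    define c1 where "c1 = al - w / ra"
    define c2 where "c2 = (be - al) + w * (1 / ra + 1 / rc)"
    define h where "h q = (- ta x + al * sg x - w - w * sg x / ra) + c1 * q + c2 * max (q + sg x) 0" for q
    have hh: "h q = ff (sg x + q) - w * kk (sg x + q) - ta x" for q
      unfolding h_def ff_def kk_def c1_def c2_def by (simp add: algebra_simps add_divide_distrib)
    show ?thesis
    proof (rule graph_local[where v=n and c="1" and h=h and r=r])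
      show "n \<bullet> n = 1" by (rule nn)
      show "(1::real) * 1 = 1" by simp
      show "(\<bar>c1\<bar> + \<bar>c2\<bar>)-lipschitz_on UNIV h" unfolding h_def[abs_def] by (rule lip_pl)
      show "r > 0" by fact
      show "\<forall>y\<in>ball x r. (y \<in> U \<longleftrightarrow> (1 *\<^sub>R J n) \<bullet> (y - x) < h (n \<bullet> (y - x)))"
      proof
        fix y assume "y \<in> ball x r"
        then have yO: "KK y > 0" "w * KK y - zz y > 0" using r unfolding Ob_def by auto
        have "y \<in> U \<longleftrightarrow> zz y < - w * KK y" unfolding U_def using yO by auto
        also have "\<dots> \<longleftrightarrow> (1 *\<^sub>R J n) \<bullet> (y - x) < h (n \<bullet> (y - x))"
          unfolding hh zz_def KK_def using sg_diff[of y x] ta_diff[of y x] by (simp add: e_def) linarith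
        finally show "(y \<in> U \<longleftrightarrow> (1 *\<^sub>R J n) \<bullet> (y - x) < h (n \<bullet> (y - x)))" .
      qed
    qed
  qed
qed

end

context vconf begin

definition "gam t = b + t *\<^sub>R n + ff t *\<^sub>R e"

lemma sg_gam: "sg (gam t) = t" and ta_gam: "ta (gam t) = ff t"
  by (simp_all add: gam_def sg_def ta_def inner_add_right nn ne ee en)

lemma kk_nonneg_iff: "kk t \<ge> 0 \<longleftrightarrow> - ra \<le> t \<and> t \<le> rc"
  using ra rc by (cases "t \<le> 0") (auto simp: kk_def max_def field_simps)

lemma PP_image: "PP = gam ` {-ra..rc}"
proof
  show "PP \<subseteq> gam ` {-ra..rc}"
  proof
    fix x assume "x \<in> PP"
    then have "kk (sg x) \<ge> 0" "ta x = ff (sg x)" by (auto simp: PP_def KK_def zz_def)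
    then have 1: "sg x \<in> {-ra..rc}" using kk_nonneg_iff by auto
    have g: "gam (sg x) = b + sg x *\<^sub>R n + ta x *\<^sub>R e" unfolding gam_def using \<open>ta x = ff (sg x)\<close> by simp
    have xg: "x = gam (sg x)" unfolding g by (rule decomp)
    show "x \<in> gam ` {-ra..rc}" by (rule image_eqI[where f=gam, OF xg 1])
  qed
  show "gam ` {-ra..rc} \<subseteq> PP"
  proof
    fix y assume "y \<in> gam ` {-ra..rc}"
    then obtain t where t: "t \<in> {-ra..rc}" "y = gam t" by blast
    have "kk t \<ge> 0" using t(1) kk_nonneg_iff[of t] by simp
    then show "y \<in> PP" unfolding t(2) PP_def KK_def zz_def by (simp add: sg_gam ta_gam)
  qed
qed

lemma cont_ff: "continuous_on X ff" unfolding ff_def by (intro continuous_intros)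

lemma connected_PP: "connected (UNIV - PP)"
proof -
  have cg: "continuous_on {-ra..rc} gam" unfolding gam_def by (intro continuous_intros cont_ff)
  have "inj_on gam {-ra..rc}" by (metis inj_onI sg_gam)
  then obtain g where hg: "homeomorphism {-ra..rc} PP gam g"
    using homeomorphism_compact[OF compact_Icc cg PP_image[symmetric]] by blast
  have "{-ra..rc} homeomorphic PP" unfolding homeomorphic_def by (intro exI[of _ gam] exI[of _ g] hg)
  then have "PP homeomorphic {-ra..rc}" using homeomorphic_sym[of "{-ra..rc}" PP] by (rule iffD1[rotated])
  then have "connected (- PP)"
    by (rule connected_complement_homeomorphic_convex_compact) auto
  then show ?thesis by (simp add: Compl_eq_Diff_UNIV)
qed

lemma lipdom:
  assumes m0: "0 < m" and m1: "m < 1" and s0: "0 < s"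
  shows "lipschitz_domain (UNIV - Dl m s)"
  unfolding lipschitz_domain_def
proof (intro conjI ballI)
  show "open (UNIV - Dl m s)" using closed_Dl by (simp add: open_Diff)
  have "Phi m s ` (UNIV - PP) = UNIV - Dl m s" using homeomorphism_image1[OF homeo[OF m0 m1 s0]] .
  then show "connected (UNIV - Dl m s)"
    using connected_continuous_image[OF cont_Phi[OF m0 m1 s0] connected_PP] by simp
  fix x assume xf: "x \<in> frontier (UNIV - Dl m s)"
  have ud: "UNIV - Dl m s = UNIV - {x. KK x \<ge> 0 \<and> \<bar>zz x\<bar> \<le> (m * s) * KK x}" by (simp add: Dl_def)
  show "\<exists>r>0. \<exists>R::real^2 \<Rightarrow> real^2. \<exists>h::real \<Rightarrow> real. \<exists>L.
        orthogonal_transformation R \<and> L-lipschitz_on UNIV h \<and>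
        (UNIV - Dl m s) \<inter> ball x r = {y \<in> ball x r. (R (y - x)) $ 2 < h ((R (y - x)) $ 1)}"
    by (rule lipdom_frontier[OF ud mult_pos_pos[OF m0 s0] xf])
qed

lemma not_AE_False: "\<not> (AE x in lebesgue_on (UNIV - PP). False)"
proof
  assume "AE x in lebesgue_on (UNIV - PP). False"
  then obtain N where N: "{x \<in> space (lebesgue_on (UNIV - PP)). \<not> False} \<subseteq> N"
     "emeasure (lebesgue_on (UNIV - PP)) N = 0" "N \<in> sets (lebesgue_on (UNIV - PP))"
    by (rule AE_E)
  have oS: "open (UNIV - PP)" using closed_PP by (simp add: open_Diff)
  then have Sm: "UNIV - PP \<in> sets lebesgue" by auto
  have sub: "UNIV - PP \<subseteq> N" using N(1) by (auto simp: space_restrict_space)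
  have "N \<in> null_sets (lebesgue_on (UNIV - PP))" using N(2,3) by (simp add: null_sets_def)
  then have "N \<in> null_sets lebesgue" using null_sets_restrict_space[OF Sm] by simp
  then have "negligible (UNIV - PP)" using sub negligible_iff_null_sets negligible_subset by blast
  moreover have "b + e \<notin> PP" by (simp add: PP_def zz_def sg_def ta_def ee ne ff_def)
  ultimately show False using open_not_negligible[OF oS] by blast
qed

lemma Inf_nonneg:
  assumes "\<And>x. P x \<Longrightarrow> (0::ereal) \<le> Q x"
  shows "0 \<le> Inf {C. AE x in lebesgue_on (UNIV - PP). P x \<and> Q x \<le> C}"
proof (rule Inf_greatest)
  fix C assume "C \<in> {C. AE x in lebesgue_on (UNIV - PP). P x \<and> Q x \<le> C}"
  then have ae: "AE x in lebesgue_on (UNIV - PP). P x \<and> Q x \<le> C" by simp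
  show "0 \<le> C"
  proof (rule ccontr)
    assume "\<not> 0 \<le> C"
    then have "AE x in lebesgue_on (UNIV - PP). False"
      using ae by (elim eventually_mono) (use assms in force)
    then show False using not_AE_False by blast
  qed
qed

lemma W1_bounds:
  assumes m0: "0 < m" and s0: "0 < s"
  shows "0 \<le> W1inf_norm (UNIV - PP) (\<lambda>x. Phi m s x - x)"
    and "W1inf_norm (UNIV - PP) (\<lambda>x. Phi m s x - x) \<le> ereal (m * s + m * Bd s)"
proof -
  let ?F = "\<lambda>x. Phi m s x - x"
  have l0: "0 \<le> Linf_part (UNIV - PP) ?F"
    unfolding Linf_part_def using Inf_nonneg[of "\<lambda>x. True" "\<lambda>x. ereal (norm (?F x))"] by simp
  have pos: "0 \<le> ereal (onorm (frechet_derivative ?F (at x)))" if "?F differentiable (at x)" for x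
  proof -
    have "(?F has_derivative frechet_derivative ?F (at x)) (at x)" using that frechet_derivative_works by blast
    then have "bounded_linear (frechet_derivative ?F (at x))" by (rule has_derivative_bounded_linear)
    then show ?thesis using onorm_pos_le by simp
  qed
  have g0: "0 \<le> grad_Linf_part (UNIV - PP) ?F"
    unfolding grad_Linf_part_def
    by (rule Inf_nonneg[where P="\<lambda>x. ?F differentiable (at x)" and Q="\<lambda>x. ereal (onorm (frechet_derivative ?F (at x)))", OF pos])
  show "0 \<le> W1inf_norm (UNIV - PP) ?F" unfolding W1inf_norm_def using l0 g0 by simp
  have l1: "Linf_part (UNIV - PP) ?F \<le> ereal (m * s)"
    unfolding Linf_part_def
    by (rule Inf_lower) (use norm_disp[of m s] m0 s0 in auto)
  have g1: "grad_Linf_part (UNIV - PP) ?F \<le> ereal (m * Bd s)"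
    unfolding grad_Linf_part_def
    by (rule Inf_lower) (use ae_grad[of m s] m0 s0 in auto)
  show "W1inf_norm (UNIV - PP) ?F \<le> ereal (m * s + m * Bd s)"
    unfolding W1inf_norm_def using add_mono[OF l1 g1] by simp
qed

end

lemma seg_char: "x \<in> closed_segment a b \<longleftrightarrow> (\<exists>t. 0 \<le> t \<and> t \<le> 1 \<and> x = b + t *\<^sub>R (a - b))"
proof
  assume "x \<in> closed_segment a b"
  then obtain u where u: "0 \<le> u" "u \<le> 1" "x = (1 - u) *\<^sub>R a + u *\<^sub>R b" unfolding in_segment(1) by blast
  have "x = b + (1 - u) *\<^sub>R (a - b)" using u(3) by (simp add: algebra_simps)
  moreover have "0 \<le> 1 - u" "1 - u \<le> 1" using u by auto
  ultimately show "\<exists>t. 0 \<le> t \<and> t \<le> 1 \<and> x = b + t *\<^sub>R (a - b)" by blast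
next
  assume "\<exists>t. 0 \<le> t \<and> t \<le> 1 \<and> x = b + t *\<^sub>R (a - b)"
  then obtain t where t: "0 \<le> t" "t \<le> 1" "x = b + t *\<^sub>R (a - b)" by blast
  have "x = (1 - (1 - t)) *\<^sub>R a + (1 - t) *\<^sub>R b" using t(3) by (simp add: algebra_simps)
  moreover have "0 \<le> 1 - t" "1 - t \<le> 1" using t by auto
  ultimately show "x \<in> closed_segment a b" unfolding in_segment(1) by blast
qed

lemma geo:
  fixes a b c :: "real^2"
  assumes ab: "a \<noteq> b" and bc: "b \<noteq> c" and int: "closed_segment a b \<inter> closed_segment b c = {b}"
  shows "\<exists>n ra rc al be. vconf n ra rc \<and> vconf.PP b n ra rc al be = closed_segment a b \<union> closed_segment b c"
proof -
  define u where "u = (1 / norm (a - b)) *\<^sub>R (a - b)"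
  define v where "v = (1 / norm (c - b)) *\<^sub>R (c - b)"
  have nab: "norm (a - b) > 0" and ncb: "norm (c - b) > 0" using ab bc by auto
  have au: "a - b = norm (a - b) *\<^sub>R u" and cv: "c - b = norm (c - b) *\<^sub>R v"
    using nab ncb by (simp_all add: u_def v_def)
  have uu: "u \<bullet> u = 1" and vv: "v \<bullet> v = 1" using nab ncb
    by (simp_all add: u_def v_def dot_square_norm power2_eq_square)
  have uv: "u \<noteq> v"
  proof
    assume uv: "u = v"
    show False
    proof (cases "norm (a - b) \<le> norm (c - b)")
      case True
      define t where "t = norm (a - b) / norm (c - b)"
      have "0 \<le> t" "t \<le> 1" using True nab ncb by (auto simp: t_def)
      moreover have "a = b + t *\<^sub>R (c - b)"
      proof -
        have "t *\<^sub>R (c - b) = (t * norm (c - b)) *\<^sub>R v" using arg_cong[OF cv, of "\<lambda>w. t *\<^sub>R w"] by simp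
        also have "t * norm (c - b) = norm (a - b)" using ncb by (simp add: t_def)
        finally show ?thesis using au uv by (simp add: algebra_simps)
      qed
      ultimately have "a \<in> closed_segment c b" using seg_char by blast
      then have "a \<in> closed_segment a b \<inter> closed_segment b c" by (simp add: closed_segment_commute)
      then show False using int ab by blast
    next
      case False
      define t where "t = norm (c - b) / norm (a - b)"
      have "0 \<le> t" "t \<le> 1" using False nab ncb by (auto simp: t_def)
      moreover have "c = b + t *\<^sub>R (a - b)"
      proof -
        have "t *\<^sub>R (a - b) = (t * norm (a - b)) *\<^sub>R u" using arg_cong[OF au, of "\<lambda>w. t *\<^sub>R w"] by simp
        also have "t * norm (a - b) = norm (c - b)" using nab by (simp add: t_def)
        finally show ?thesis using cv uv by (simp add: algebra_simps)
      qed
      ultimately have "c \<in> closed_segment a b" using seg_char by blast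
      then have "c \<in> closed_segment a b \<inter> closed_segment b c" by simp
      then show False using int bc by auto
    qed
  qed
  define d where "d = v - u"
  have dd: "d \<bullet> d > 0" using uv by (simp add: d_def)
  have du: "d \<bullet> u = - (d \<bullet> d) / 2" and dv: "d \<bullet> v = (d \<bullet> d) / 2"
    using uu vv by (simp_all add: d_def inner_diff_left inner_diff_right inner_commute field_simps)
  have nd: "norm d > 0" using dd by (simp add: d_def)
  define n where "n = (1 / norm d) *\<^sub>R d"
  have nn: "n \<bullet> n = 1" using nd by (simp add: n_def dot_square_norm power2_eq_square)
  define sa where "sa = n \<bullet> (a - b)"
  define sc where "sc = n \<bullet> (c - b)"
  have sa: "sa < 0"
  proof -
    have e1: "sa = norm (a - b) * ((1 / norm d) * (d \<bullet> u))" unfolding sa_def n_def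
      by (subst au) (simp add: algebra_simps)
    have "d \<bullet> u < 0" using du dd by linarith
    then have e2: "(1 / norm d) * (d \<bullet> u) < 0" using nd by (simp add: divide_neg_pos)
    show ?thesis unfolding e1 by (rule mult_pos_neg[OF nab e2])
  qed
  have sc: "sc > 0"
  proof -
    have e1: "sc = norm (c - b) * ((1 / norm d) * (d \<bullet> v))" unfolding sc_def n_def
      by (subst cv) (simp add: algebra_simps)
    have "d \<bullet> v > 0" using dv dd by linarith
    then have e2: "(1 / norm d) * (d \<bullet> v) > 0" using nd by simp
    show ?thesis unfolding e1 by (rule mult_pos_pos[OF ncb e2])
  qed
  define ra where "ra = - sa"
  define rc where "rc = sc"
  have V: "vconf n ra rc" unfolding vconf_def using nn sa sc by (simp add: ra_def rc_def)
  define al where "al = (J n \<bullet> (a - b)) / sa"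
  define be where "be = (J n \<bullet> (c - b)) / sc"
  interpret V: vconf b n ra rc al be by (rule V)
  have sga: "V.sg a = sa" and sgc: "V.sg c = sc" by (simp_all add: V.sg_def sa_def sc_def)
  have taa: "V.ta a = al * sa" using sa by (simp add: V.ta_def V.e_def al_def)
  have tac: "V.ta c = be * sc" using sc by (simp add: V.ta_def V.e_def be_def)
  have adec: "a - b = sa *\<^sub>R (n + al *\<^sub>R V.e)"
  proof -
    have "a = b + sa *\<^sub>R n + (al * sa) *\<^sub>R V.e" using V.decomp[of a] sga taa by simp
    then show ?thesis by (simp add: algebra_simps)
  qed
  have cdec: "c - b = sc *\<^sub>R (n + be *\<^sub>R V.e)"
  proof -
    have "c = b + sc *\<^sub>R n + (be * sc) *\<^sub>R V.e" using V.decomp[of c] sgc tac by simp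
    then show ?thesis by (simp add: algebra_simps)
  qed
  have "V.PP = closed_segment a b \<union> closed_segment b c"
  proof
    show "V.PP \<subseteq> closed_segment a b \<union> closed_segment b c"
    proof
      fix x assume "x \<in> V.PP"
      then have K: "V.kk (V.sg x) \<ge> 0" and Z: "V.ta x = V.ff (V.sg x)"
        by (auto simp: V.PP_def V.KK_def V.zz_def)
      define t where "t = V.sg x"
      have t: "- ra \<le> t" "t \<le> rc" using K V.kk_nonneg_iff unfolding t_def by auto
      have xd: "x = b + t *\<^sub>R n + V.ff t *\<^sub>R V.e" using V.decomp[of x] Z unfolding t_def by simp
      show "x \<in> closed_segment a b \<union> closed_segment b c"
      proof (cases "t \<le> 0")
        case True
        have ff: "V.ff t = al * t" using True by (simp add: V.ff_def max_def)
        have "x = b + (t / sa) *\<^sub>R (a - b)"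
          unfolding adec xd ff using sa by (simp add: algebra_simps)
        moreover have "0 \<le> t / sa" "t / sa \<le> 1" using True t sa unfolding ra_def
          by (simp_all add: divide_nonpos_neg divide_le_eq)
        ultimately have "x \<in> closed_segment a b" using seg_char by blast
        then show ?thesis by blast
      next
        case False
        have ff: "V.ff t = be * t" using False by (simp add: V.ff_def max_def algebra_simps)
        have "x = b + (t / sc) *\<^sub>R (c - b)"
          unfolding cdec xd ff using sc by (simp add: algebra_simps)
        moreover have "0 \<le> t / sc" "t / sc \<le> 1" using False t sc unfolding rc_def
          by (simp_all add: divide_le_eq)
        ultimately have "x \<in> closed_segment c b" using seg_char by blast
        then show ?thesis by (simp add: closed_segment_commute)
      qed
    qed
    show "closed_segment a b \<union> closed_segment b c \<subseteq> V.PP"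
    proof
      fix x assume "x \<in> closed_segment a b \<union> closed_segment b c"
      then consider "x \<in> closed_segment a b" | "x \<in> closed_segment c b" by (auto simp: closed_segment_commute)
      then show "x \<in> V.PP"
      proof cases
        case 1
        then obtain t where t: "0 \<le> t" "t \<le> 1" "x = b + t *\<^sub>R (a - b)" using seg_char by blast
        have sgx: "V.sg x = t * sa" unfolding t(3) by (simp add: V.sg_def sa_def)
        have tax: "V.ta x = t * (al * sa)" unfolding t(3) using taa by (simp add: V.ta_def)
        have le: "V.sg x \<le> 0" using sgx t sa by (simp add: mult_nonneg_nonpos)
        have sara: "sa = - ra" by (simp add: ra_def)
        have "V.KK x = 1 - t" using V.side_L[OF le] sgx V.ra unfolding sara by (simp add: V.KL_def)
        moreover have "V.zz x = 0" using V.side_L[OF le] sgx tax by (simp add: V.ZL_def)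
        ultimately show ?thesis using t by (simp add: V.PP_def)
      next
        case 2
        then obtain t where t: "0 \<le> t" "t \<le> 1" "x = b + t *\<^sub>R (c - b)" using seg_char by blast
        have sgx: "V.sg x = t * sc" unfolding t(3) by (simp add: V.sg_def sc_def)
        have tax: "V.ta x = t * (be * sc)" unfolding t(3) using tac by (simp add: V.ta_def)
        have le: "V.sg x \<ge> 0" using sgx t sc by simp
        have scrc: "sc = rc" by (simp add: rc_def)
        have "V.KK x = 1 - t" using V.side_R[OF le] sgx V.rc unfolding scrc by (simp add: V.KR_def)
        moreover have "V.zz x = 0" using V.side_R[OF le] sgx tax by (simp add: V.ZR_def)
        ultimately show ?thesis using t by (simp add: V.PP_def)
      qed
    qed
  qed
  then show ?thesis using V by blast
qed

lemma to_two:
  assumes "segment_or_two_segments P"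
  shows "\<exists>a b c. a \<noteq> b \<and> b \<noteq> c \<and> closed_segment a b \<inter> closed_segment b c = {b} \<and>
     P = closed_segment a b \<union> closed_segment b c"
proof -
  from assms consider (one) a b where "a \<noteq> b" "P = closed_segment a b"
    | (two) a b c where "a \<noteq> b" "b \<noteq> c" "closed_segment a b \<inter> closed_segment b c = {b}"
        "P = closed_segment a b \<union> closed_segment b c"
    unfolding segment_or_two_segments_def by blast
  then show ?thesis
  proof cases
    case one
    define m where "m = midpoint a b"
    have mi: "m \<in> closed_segment a b" by (simp add: m_def)
    have h1: "midpoint a b \<noteq> a" "midpoint a b \<noteq> b" using one(1) by simp_all
    have "a \<noteq> m" using h1(1) unfolding m_def by (rule not_sym)
    moreover have "m \<noteq> b" using h1(2) unfolding m_def .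
    moreover have "closed_segment a m \<inter> closed_segment m b = {m}" using Int_closed_segment mi by blast
    moreover have "P = closed_segment a m \<union> closed_segment m b" using Un_closed_segment[OF mi] one(2) by simp
    ultimately show ?thesis by blast
  next
    case two
    then show ?thesis by blast
  qed
qed

theorem lemma3p2:
  fixes Pi_set :: "(real^2) set"
  assumes "segment_or_two_segments Pi_set"
  shows "\<exists>\<delta>0>0. \<exists>Delta::real \<Rightarrow> (real^2) set. \<exists>Phi::real \<Rightarrow> real^2 \<Rightarrow> real^2.
     (\<forall>\<delta>. 0 < \<delta> \<and> \<delta> < \<delta>0 \<longrightarrow>
        (\<exists>Psi. homeomorphism (UNIV - Pi_set) (UNIV - Delta \<delta>) (Phi \<delta>) Psi) \<and>
        piecewise_affine_on (UNIV - Pi_set) (Phi \<delta>) \<and>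
        lipschitz_domain (UNIV - Delta \<delta>) \<and>
        (\<forall>x \<in> UNIV - nbhd Pi_set \<delta>. Phi \<delta> x = x)) \<and>
     ((\<lambda>\<delta>. W1inf_norm (UNIV - Pi_set) (\<lambda>x. Phi \<delta> x - x)) \<longlongrightarrow> 0) (at_right 0)"
proof -
  obtain a b c where abc: "a \<noteq> b" "b \<noteq> c" "closed_segment a b \<inter> closed_segment b c = {b}"
     "Pi_set = closed_segment a b \<union> closed_segment b c"
    using to_two[OF assms] by blast
  obtain n ra rc al be where V: "vconf n ra rc" and PPe: "vconf.PP b n ra rc al be = closed_segment a b \<union> closed_segment b c"
    using geo[OF abc(1-3)] by blast
  interpret V: vconf b n ra rc al be by (rule V)
  have PPi: "V.PP = Pi_set" using PPe abc(4) by simp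
  have main: "\<forall>\<delta>. 0 < \<delta> \<and> \<delta> < 1 \<longrightarrow>
        (\<exists>Psi. homeomorphism (UNIV - Pi_set) (UNIV - V.Dl (\<delta>/2) (\<delta>/2)) (V.Phi (\<delta>/2) (\<delta>/2)) Psi) \<and>
        piecewise_affine_on (UNIV - Pi_set) (V.Phi (\<delta>/2) (\<delta>/2)) \<and>
        lipschitz_domain (UNIV - V.Dl (\<delta>/2) (\<delta>/2)) \<and>
        (\<forall>x \<in> UNIV - nbhd Pi_set \<delta>. V.Phi (\<delta>/2) (\<delta>/2) x = x)"
  proof (intro allI impI conjI)
    fix \<delta> :: real assume d: "0 < \<delta> \<and> \<delta> < 1"
    have m0: "0 < \<delta>/2" and m1: "\<delta>/2 < 1" using d by auto
    show "\<exists>Psi. homeomorphism (UNIV - Pi_set) (UNIV - V.Dl (\<delta>/2) (\<delta>/2)) (V.Phi (\<delta>/2) (\<delta>/2)) Psi"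
      using V.homeo[OF m0 m1 m0] PPi by blast
    show "piecewise_affine_on (UNIV - Pi_set) (V.Phi (\<delta>/2) (\<delta>/2))"
      using V.pw_Phi[of "\<delta>/2" "\<delta>/2"] m0 PPi by simp
    show "lipschitz_domain (UNIV - V.Dl (\<delta>/2) (\<delta>/2))" by (rule V.lipdom[OF m0 m1 m0])
    show "\<forall>x \<in> UNIV - nbhd Pi_set \<delta>. V.Phi (\<delta>/2) (\<delta>/2) x = x"
    proof
      fix x assume x: "x \<in> UNIV - nbhd Pi_set \<delta>"
      show "V.Phi (\<delta>/2) (\<delta>/2) x = x"
      proof (rule ccontr)
        assume "V.Phi (\<delta>/2) (\<delta>/2) x \<noteq> x"
        then have "x \<in> nbhd V.PP \<delta>" using V.disp_nbhd[of "\<delta>/2" "\<delta>/2" \<delta> x] m0 by simp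
        then show False using x PPi by simp
      qed
    qed
  qed
  define B where "B \<delta> = \<delta>/2 * (\<delta>/2) + \<delta>/2 * V.Bd (\<delta>/2)" for \<delta>
  have Bl: "(B \<longlongrightarrow> 0) (at_right 0)"
  proof -
    have "(B \<longlongrightarrow> B 0) (at_right 0)" unfolding B_def[abs_def] V.Bd_def by (intro tendsto_intros) auto
    then show ?thesis by (simp add: B_def V.Bd_def)
  qed
  have ev: "eventually (\<lambda>\<delta>. \<delta> \<in> {0<..<1}) (at_right (0::real))" by (rule eventually_at_right_real) simp
  have lim: "((\<lambda>\<delta>. W1inf_norm (UNIV - Pi_set) (\<lambda>x. V.Phi (\<delta>/2) (\<delta>/2) x - x)) \<longlongrightarrow> 0) (at_right 0)"
  proof (rule tendsto_sandwich[where f="\<lambda>_. 0" and h="\<lambda>\<delta>. ereal (B \<delta>)"])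
    show "eventually (\<lambda>\<delta>. 0 \<le> W1inf_norm (UNIV - Pi_set) (\<lambda>x. V.Phi (\<delta>/2) (\<delta>/2) x - x)) (at_right 0)"
      using ev by (elim eventually_mono) (use V.W1_bounds(1) PPi in auto)
    show "eventually (\<lambda>\<delta>. W1inf_norm (UNIV - Pi_set) (\<lambda>x. V.Phi (\<delta>/2) (\<delta>/2) x - x) \<le> ereal (B \<delta>)) (at_right 0)"
      using ev
    proof (elim eventually_mono)
      fix \<delta> :: real assume "\<delta> \<in> {0<..<1}"
      then have h: "0 < \<delta>/2" by simp
      from V.W1_bounds(2)[OF h h] show "W1inf_norm (UNIV - Pi_set) (\<lambda>x. V.Phi (\<delta>/2) (\<delta>/2) x - x) \<le> ereal (B \<delta>)"
        unfolding B_def PPi .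
    qed
    show "((\<lambda>_. 0::ereal) \<longlongrightarrow> 0) (at_right 0)" by simp
    show "((\<lambda>\<delta>. ereal (B \<delta>)) \<longlongrightarrow> 0) (at_right 0)" using tendsto_ereal[OF Bl] by (simp add: zero_ereal_def)
  qed
  show ?thesis
    apply (rule exI[of _ 1])
    apply (rule conjI, simp)
    apply (rule exI[of _ "\<lambda>\<delta>. V.Dl (\<delta>/2) (\<delta>/2)"])
    apply (rule exI[of _ "\<lambda>\<delta>. V.Phi (\<delta>/2) (\<delta>/2)"])
    using main lim by simp
qed

end
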